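(* Let $\Gamma$ be a simplicial complex on $V_1=\{x_1,\ldots,x_n\}$ with $m$ facets. Let $G_1,\ldots,G_m\subseteq V_1$ be such that each $V_1\setminus G_j$ is a face of $\Gamma$ and every facet of $\Gamma$ is of the form $V_1\setminus G_j$ for some $j$. Let $y_1,\ldots,y_m$ be new vertices, let $\Delta_{V_1}$ be the $(n-1)$-simplex on $x_1,\ldots,x_n$, and define \[\Delta'=\left\{\sigma\cup\tau:\ \sigma\in\Gamma,\ \tau\subseteq\{y_j:\sigma\subseteq V_1\setminus G_j\}\right\},\qquad \Delta=\Delta'\cup\Delta_{V_1}.\] Let $I$ be the Stanley--Reisner ideal of $\Delta$ in $R=\Bbbk[x_1,\ldots,x_n,y_1,\ldots,y_m]$ ($\Bbbk$ a field), and let $I_\Gamma$ be the extension to $R$ of the Stanley--Reisner ideal of $\Gamma$ in $\Bbbk[x_1,\ldots,x_n]$. Then $I=(x_iy_j: 1\leq j\leq m,\ x_i\in G_j)$, $I=(I+I_\Gamma)\cap(y_1,\ldots,y_m)$, and the Stanley--Reisner ideal of $\Delta'$ is $I+I_\Gamma$.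
   Context: The Stanley--Reisner ideal of a simplicial complex $\Delta$ on a vertex set $V$ (the variables of a polynomial ring) is the ideal generated by the monomials $\prod_{x\in F}x$ for $F\subseteq V$ not a face of $\Delta$. *)

theory Defs
  imports "HOL-Library.Poly_Mapping"
begin

text \<open>Multivariate polynomials over 'k in the variables of type 'v:
  finitely supported maps from exponent vectors to coefficients.\<close>

type_synonym ('v, 'k) mpoly = "('v \<Rightarrow>\<^sub>0 nat) \<Rightarrow>\<^sub>0 'k"

definition var :: "'v \<Rightarrow> ('v, 'k::comm_ring_1) mpoly" where
  "var x = Poly_Mapping.single (Poly_Mapping.single x 1) 1"

definition sqmono :: "'v set \<Rightarrow> ('v, 'k::comm_ring_1) mpoly" where
  "sqmono F = (\<Prod>x\<in>F. var x)"

definition gen_ideal :: "'a::comm_ring_1 set \<Rightarrow> 'a set" where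
  "gen_ideal S = {r. \<exists>F c. finite F \<and> F \<subseteq> S \<and> r = (\<Sum>s\<in>F. c s * s)}"

definition ideal_sum :: "'a::comm_ring_1 set \<Rightarrow> 'a set \<Rightarrow> 'a set" where
  "ideal_sum I J = {a + b | a b. a \<in> I \<and> b \<in> J}"

definition simplicial_complex :: "'v set \<Rightarrow> 'v set set \<Rightarrow> bool" where
  "simplicial_complex V D \<longleftrightarrow> (\<forall>F\<in>D. F \<subseteq> V) \<and> (\<forall>F\<in>D. \<forall>G. G \<subseteq> F \<longrightarrow> G \<in> D)"

definition facets :: "'v set set \<Rightarrow> 'v set set" where
  "facets D = {F \<in> D. \<forall>G\<in>D. F \<subseteq> G \<longrightarrow> G = F}"

definition SR_ideal :: "'v set \<Rightarrow> 'v set set \<Rightarrow> ('v, 'k::comm_ring_1) mpoly set" where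
  "SR_ideal V D = gen_ideal {sqmono F | F. F \<subseteq> V \<and> F \<notin> D}"

end

theory Submission imports Defs begin

lemma gen_ideal_I: "finite F \<Longrightarrow> F \<subseteq> S \<Longrightarrow> (\<Sum>s\<in>F. c s * s) \<in> gen_ideal S"
  unfolding gen_ideal_def by blast

lemma gen_ideal_0: "0 \<in> gen_ideal S"
  unfolding gen_ideal_def by (rule CollectI, rule exI[of _ "{}"], auto)

lemma gen_ideal_base: "s \<in> S \<Longrightarrow> s \<in> gen_ideal S"
  unfolding gen_ideal_def by (rule CollectI, rule exI[of _ "{s}"], rule exI[of _ "\<lambda>_. 1"], auto)

lemma gen_ideal_mult: "a \<in> gen_ideal S \<Longrightarrow> r * a \<in> gen_ideal S"
proof -
  assume "a \<in> gen_ideal S"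
  then obtain F c where F: "finite F" "F \<subseteq> S" "a = (\<Sum>s\<in>F. c s * s)" unfolding gen_ideal_def by blast
  have "r * a = (\<Sum>s\<in>F. (r * c s) * s)" using F(3) by (simp add: sum_distrib_left mult.assoc)
  then show ?thesis using F gen_ideal_I[of F S "\<lambda>s. r * c s"] by simp
qed

lemma gen_ideal_add: "a \<in> gen_ideal S \<Longrightarrow> b \<in> gen_ideal S \<Longrightarrow> a + b \<in> gen_ideal S"
proof -
  assume "a \<in> gen_ideal S" "b \<in> gen_ideal S"
  then obtain F c F2 c2 where F: "finite F" "F \<subseteq> S" "a = (\<Sum>s\<in>F. c s * s)"
    and F2: "finite F2" "F2 \<subseteq> S" "b = (\<Sum>s\<in>F2. c2 s * s)" unfolding gen_ideal_def by blast
  define d where "d s = (if s \<in> F then c s else 0) + (if s \<in> F2 then c2 s else 0)" for s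
  have "(\<Sum>s\<in>F \<union> F2. d s * s) = (\<Sum>s\<in>F \<union> F2. (if s \<in> F then c s * s else 0)) + (\<Sum>s\<in>F \<union> F2. (if s \<in> F2 then c2 s * s else 0))"
    unfolding d_def sum.distrib[symmetric] by (rule sum.cong) (auto simp: distrib_right)
  also have "\<dots> = a + b"
  proof -
    have fu: "finite (F \<union> F2)" using F F2 by simp
    have i1: "(F \<union> F2) \<inter> F = F" and i2: "(F \<union> F2) \<inter> F2 = F2" by blast+
    have "(\<Sum>s\<in>F \<union> F2. if s \<in> F then c s * s else 0) = (\<Sum>s\<in>(F \<union> F2) \<inter> F. c s * s)"
      by (rule sum.inter_restrict[OF fu, symmetric])
    also have "\<dots> = a" unfolding i1 using F(3) by simp
    finally have 1: "(\<Sum>s\<in>F \<union> F2. if s \<in> F then c s * s else 0) = a" .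
    have "(\<Sum>s\<in>F \<union> F2. if s \<in> F2 then c2 s * s else 0) = (\<Sum>s\<in>(F \<union> F2) \<inter> F2. c2 s * s)"
      by (rule sum.inter_restrict[OF fu, symmetric])
    also have "\<dots> = b" unfolding i2 using F2(3) by simp
    finally have 2: "(\<Sum>s\<in>F \<union> F2. if s \<in> F2 then c2 s * s else 0) = b" .
    show ?thesis unfolding 1 2 ..
  qed
  finally show ?thesis using F F2 gen_ideal_I[of "F \<union> F2" S d] by simp
qed

lemma gen_ideal_neg: "a \<in> gen_ideal S \<Longrightarrow> - a \<in> gen_ideal S"
proof -
  assume "a \<in> gen_ideal S"
  from gen_ideal_mult[OF this, of "-1"] show ?thesis by simp
qed

lemma gen_ideal_diff: "a \<in> gen_ideal S \<Longrightarrow> b \<in> gen_ideal S \<Longrightarrow> a - b \<in> gen_ideal S"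
proof -
  assume a: "a \<in> gen_ideal S" and b: "b \<in> gen_ideal S"
  have "a + - b \<in> gen_ideal S" by (rule gen_ideal_add[OF a gen_ideal_neg[OF b]])
  then show ?thesis by simp
qed

lemma gen_ideal_sum: "finite A \<Longrightarrow> (\<And>i. i \<in> A \<Longrightarrow> f i \<in> gen_ideal S) \<Longrightarrow> sum f A \<in> gen_ideal S"
proof (induction A rule: finite_induct)
  case empty then show ?case by (simp add: gen_ideal_0)
next
  case (insert x F) then show ?case by (simp add: gen_ideal_add)
qed

lemma gen_ideal_mults:
  assumes "t \<in> gen_ideal T" "\<And>s. s \<in> T \<Longrightarrow> s * u \<in> gen_ideal W"
  shows "t * u \<in> gen_ideal W"
proof -
  obtain F c where F: "finite F" "F \<subseteq> T" "t = (\<Sum>s\<in>F. c s * s)" using assms(1) unfolding gen_ideal_def by blast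
  have "t * u = (\<Sum>s\<in>F. c s * (s * u))" using F(3) by (simp add: sum_distrib_right mult.assoc)
  also have "\<dots> \<in> gen_ideal W" using F by (auto intro!: gen_ideal_sum gen_ideal_mult[of "_ * u"] assms(2))
  finally show ?thesis .
qed

lemma gen_ideal_subset: "(\<And>s. s \<in> S \<Longrightarrow> s \<in> gen_ideal T) \<Longrightarrow> gen_ideal S \<subseteq> gen_ideal T"
  using gen_ideal_mults[of _ S 1 T] by auto

lemma gen_ideal_Un: "ideal_sum (gen_ideal A) (gen_ideal B) = gen_ideal (A \<union> B)"
proof
  show "ideal_sum (gen_ideal A) (gen_ideal B) \<subseteq> gen_ideal (A \<union> B)"
  proof -
    have "gen_ideal A \<subseteq> gen_ideal (A \<union> B)" "gen_ideal B \<subseteq> gen_ideal (A \<union> B)"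
      by (auto intro!: gen_ideal_subset gen_ideal_base)
    then show ?thesis unfolding ideal_sum_def by (blast intro: gen_ideal_add)
  qed
  show "gen_ideal (A \<union> B) \<subseteq> ideal_sum (gen_ideal A) (gen_ideal B)"
  proof
    fix r assume "r \<in> gen_ideal (A \<union> B)"
    then obtain F c where F: "finite F" "F \<subseteq> A \<union> B" "r = (\<Sum>s\<in>F. c s * s)" unfolding gen_ideal_def by blast
    have "r = (\<Sum>s\<in>F \<inter> A. c s * s) + (\<Sum>s\<in>F - A. c s * s)" using F by (simp add: sum.Int_Diff)
    moreover have "(\<Sum>s\<in>F \<inter> A. c s * s) \<in> gen_ideal A" using F by (intro gen_ideal_I) auto
    moreover have "(\<Sum>s\<in>F - A. c s * s) \<in> gen_ideal B" using F by (intro gen_ideal_I) auto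
    ultimately show "r \<in> ideal_sum (gen_ideal A) (gen_ideal B)" unfolding ideal_sum_def by blast
  qed
qed

definition killW :: "'v set \<Rightarrow> ('v, 'k::comm_ring_1) mpoly \<Rightarrow> ('v, 'k) mpoly" where
  "killW W p = Abs_poly_mapping (\<lambda>e. if (\<forall>v\<in>W. Poly_Mapping.lookup e v = (0::nat)) then Poly_Mapping.lookup p e else 0)"

lemma lookup_killW: "Poly_Mapping.lookup (killW W p) k = (if (\<forall>v\<in>W. Poly_Mapping.lookup k v = 0) then Poly_Mapping.lookup p k else 0)"
proof -
  have "finite {k. (if (\<forall>v\<in>W. Poly_Mapping.lookup k v = 0) then Poly_Mapping.lookup p k else 0) \<noteq> 0}"
    by (rule finite_subset[OF _ finite_lookup[of p]]) auto
  then show ?thesis unfolding killW_def by simp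
qed

lemma killW_add: "killW W (p + q) = killW W p + killW W q"
  by (rule poly_mapping_eqI) (simp add: lookup_killW lookup_add)
lemma killW_diff: "killW W (p - q) = killW W p - killW W q"
  by (rule poly_mapping_eqI) (simp add: lookup_killW lookup_minus)
lemma killW_sum: "killW W (sum f A) = (\<Sum>a\<in>A. killW W (f a))"
proof (rule poly_mapping_eqI)
  fix k show "Poly_Mapping.lookup (killW W (sum f A)) k = Poly_Mapping.lookup (\<Sum>a\<in>A. killW W (f a)) k"
  proof (cases "\<forall>v\<in>W. Poly_Mapping.lookup k v = 0")
    case True then show ?thesis by (simp add: lookup_killW lookup_sum)
  next
    case False then have F: "(\<forall>v\<in>W. Poly_Mapping.lookup k v = 0) \<longleftrightarrow> False" by simp
    show ?thesis by (simp only: lookup_killW lookup_sum F if_False sum.neutral_const)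
  qed
qed
lemma killW_single: "killW W (Poly_Mapping.single l a) = (if (\<forall>v\<in>W. Poly_Mapping.lookup l v = 0) then Poly_Mapping.single l a else 0)"
  by (rule poly_mapping_eqI) (auto simp add: lookup_killW lookup_single when_def)

lemma pm_expand: "(p :: 'a \<Rightarrow>\<^sub>0 'b::comm_monoid_add) = (\<Sum>l\<in>Poly_Mapping.keys p. Poly_Mapping.single l (Poly_Mapping.lookup p l))"
  by (rule poly_mapping_eqI) (auto simp add: lookup_sum lookup_single when_def in_keys_iff)

lemma killW_mult_single:
  "killW W (c * Poly_Mapping.single e 1) = (if (\<forall>v\<in>W. Poly_Mapping.lookup e v = 0) then killW W c * Poly_Mapping.single e 1 else 0)"
proof -
  have c: "c * Poly_Mapping.single e 1 = (\<Sum>l\<in>Poly_Mapping.keys c. Poly_Mapping.single (l + e) (Poly_Mapping.lookup c l))"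
    by (subst pm_expand[of c]) (simp add: sum_distrib_right mult_single)
  have k: "killW W c * Poly_Mapping.single e 1 = (\<Sum>l\<in>Poly_Mapping.keys c. killW W (Poly_Mapping.single l (Poly_Mapping.lookup c l)) * Poly_Mapping.single e 1)"
    by (subst pm_expand[of c]) (simp add: killW_sum sum_distrib_right)
  show ?thesis
  proof (cases "\<forall>v\<in>W. Poly_Mapping.lookup e v = 0")
    case True then show ?thesis unfolding c k killW_sum killW_single by (auto simp: lookup_add mult_single intro!: sum.cong)
  next
    case False
    then obtain v where "v \<in> W" "Poly_Mapping.lookup e v \<noteq> 0" by auto
    then show ?thesis unfolding c killW_sum killW_single using False by (auto simp: lookup_add intro!: sum.neutral)
  qed
qed

lemma sqmono_single: "finite F \<Longrightarrow> sqmono F = Poly_Mapping.single (\<Sum>x\<in>F. Poly_Mapping.single x 1) (1::'k::comm_ring_1)"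
  unfolding sqmono_def by (induction F rule: finite_induct) (auto simp: var_def mult_single)

lemma var_single: "var v = Poly_Mapping.single (Poly_Mapping.single v 1) 1"
  by (simp add: var_def)

lemma killW_var: "v \<in> W \<Longrightarrow> killW W (c * var v) = 0"
  unfolding var_single killW_mult_single by auto

lemma killW_sqmono: "finite F \<Longrightarrow> F \<inter> W = {} \<Longrightarrow> killW W (c * sqmono F) = killW W c * sqmono F"
  unfolding sqmono_single killW_mult_single by (auto simp: lookup_sum lookup_single when_def)

lemma diff_killW: "p - killW W p \<in> gen_ideal (var ` W)"
proof -
  have "p - killW W p = (\<Sum>l\<in>Poly_Mapping.keys p. Poly_Mapping.single l (Poly_Mapping.lookup p l) - killW W (Poly_Mapping.single l (Poly_Mapping.lookup p l)))"
    by (subst (1 2) pm_expand[of p]) (simp add: killW_sum sum_subtractf)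
  also have "\<dots> \<in> gen_ideal (var ` W)"
  proof (rule gen_ideal_sum)
    fix l assume "l \<in> Poly_Mapping.keys p"
    show "Poly_Mapping.single l (Poly_Mapping.lookup p l) - killW W (Poly_Mapping.single l (Poly_Mapping.lookup p l)) \<in> gen_ideal (var ` W)"
    proof (cases "\<forall>v\<in>W. Poly_Mapping.lookup l v = 0")
      case True then show ?thesis by (simp add: killW_single gen_ideal_0)
    next
      case False
      then obtain v where v: "v \<in> W" "Poly_Mapping.lookup l v \<noteq> 0" by auto
      have l: "l = Poly_Mapping.single v 1 + (l - Poly_Mapping.single v 1)"
        using v by (intro poly_mapping_eqI) (auto simp: lookup_add lookup_minus lookup_single when_def)
      have "Poly_Mapping.single l (Poly_Mapping.lookup p l) = Poly_Mapping.single (l - Poly_Mapping.single v 1) (Poly_Mapping.lookup p l) * var v"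
        by (subst l) (simp add: var_single mult_single add.commute)
      moreover have "killW W (Poly_Mapping.single l (Poly_Mapping.lookup p l)) = 0" using False unfolding killW_single by (simp only: if_False)
      ultimately have eq: "Poly_Mapping.single l (Poly_Mapping.lookup p l) - killW W (Poly_Mapping.single l (Poly_Mapping.lookup p l))
          = Poly_Mapping.single (l - Poly_Mapping.single v 1) (Poly_Mapping.lookup p l) * var v" by simp
      have "var v \<in> gen_ideal (var ` W)" using v by (intro gen_ideal_base) blast
      then show ?thesis unfolding eq by (rule gen_ideal_mult)
    qed
  qed simp
  finally show ?thesis .
qed

theorem proposition4p5:
  fixes X :: "'v set" and y :: "nat \<Rightarrow> 'v" and m n :: nat
    and \<Gamma> :: "'v set set" and G :: "nat \<Rightarrow> 'v set"
    and \<Delta>' \<Delta> :: "'v set set"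
    and I I\<Gamma> :: "('v, 'k::field) mpoly set"
  assumes X_fin: "finite X" and X_card: "card X = n"
    and vertices: "(UNIV :: 'v set) = X \<union> y ` {..<m}"
    and disj: "X \<inter> y ` {..<m} = {}"
    and y_inj: "inj_on y {..<m}"
    and cplx: "simplicial_complex X \<Gamma>"
    and m_facets: "card (facets \<Gamma>) = m"
    and G_sub: "\<forall>j<m. G j \<subseteq> X"
    and G_face: "\<forall>j<m. X - G j \<in> \<Gamma>"
    and G_facets: "\<forall>F\<in>facets \<Gamma>. \<exists>j<m. F = X - G j"
    and \<Delta>'_def: "\<Delta>' = {\<sigma> \<union> \<tau> | \<sigma> \<tau>. \<sigma> \<in> \<Gamma> \<and> \<tau> \<subseteq> {y j | j. j < m \<and> \<sigma> \<subseteq> X - G j}}"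
    and \<Delta>_def: "\<Delta> = \<Delta>' \<union> Pow X"
    and I_def: "I = SR_ideal UNIV \<Delta>"
    and I\<Gamma>_def: "I\<Gamma> = SR_ideal X \<Gamma>"
  shows "I = gen_ideal {var x * var (y j) | x j. j < m \<and> x \<in> G j}
     \<and> I = ideal_sum I I\<Gamma> \<inter> gen_ideal (var ` y ` {..<m})
     \<and> SR_ideal UNIV \<Delta>' = ideal_sum I I\<Gamma>"
proof -
  let ?Y = "y ` {..<m}"
  have finXY: "finite (X \<union> ?Y)" using X_fin by simp
  have finU: "finite (UNIV::'v set)" unfolding vertices by (rule finXY)
  have finF: "\<And>F::'v set. finite F" using finite_subset[OF subset_UNIV finU] .
  have GX: "\<And>\<sigma>. \<sigma> \<in> \<Gamma> \<Longrightarrow> \<sigma> \<subseteq> X" using cplx unfolding simplicial_complex_def by blast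
  have Gdown: "\<And>\<sigma> \<tau>. \<sigma> \<in> \<Gamma> \<Longrightarrow> \<tau> \<subseteq> \<sigma> \<Longrightarrow> \<tau> \<in> \<Gamma>" using cplx unfolding simplicial_complex_def by blast
  have yX: "\<And>j. j < m \<Longrightarrow> y j \<notin> X" using disj by blast
  have notX: "\<exists>j<m. z = y j" if "z \<notin> X" for z
  proof -
    have "z \<in> X \<union> ?Y" by (subst vertices[symmetric]) (rule UNIV_I)
    then show ?thesis using that by blast
  qed
  have char: "F \<in> \<Delta>' \<longleftrightarrow> F \<inter> X \<in> \<Gamma> \<and> (\<forall>j<m. y j \<in> F \<longrightarrow> F \<inter> X \<subseteq> X - G j)" for F
  proof
    assume "F \<in> \<Delta>'"
    then obtain \<sigma> \<tau> where F: "F = \<sigma> \<union> \<tau>" "\<sigma> \<in> \<Gamma>" "\<tau> \<subseteq> {y j | j. j < m \<and> \<sigma> \<subseteq> X - G j}"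
      using \<Delta>'_def by blast
    have sX: "\<sigma> \<subseteq> X" using GX F(2) .
    have "\<tau> \<inter> X = {}" using F(3) yX by blast
    then have FX: "F \<inter> X = \<sigma>" using F(1) sX by blast
    have "F \<inter> X \<subseteq> X - G j" if j: "j < m" "y j \<in> F" for j
    proof -
      have "y j \<notin> \<sigma>" using sX yX[OF j(1)] by blast
      then have "y j \<in> \<tau>" using F(1) j(2) by blast
      then obtain j' where j': "y j = y j'" "j' < m" "\<sigma> \<subseteq> X - G j'" using F(3) by blast
      have "j = j'" using y_inj j(1) j' unfolding inj_on_def by blast
      then show ?thesis using FX j' by simp
    qed
    then show "F \<inter> X \<in> \<Gamma> \<and> (\<forall>j<m. y j \<in> F \<longrightarrow> F \<inter> X \<subseteq> X - G j)" using FX F(2) by blast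
  next
    assume H: "F \<inter> X \<in> \<Gamma> \<and> (\<forall>j<m. y j \<in> F \<longrightarrow> F \<inter> X \<subseteq> X - G j)"
    have "F - X \<subseteq> {y j | j. j < m \<and> F \<inter> X \<subseteq> X - G j}"
    proof
      fix z assume z: "z \<in> F - X"
      then obtain j where "j < m" "z = y j" using notX by blast
      then show "z \<in> {y j | j. j < m \<and> F \<inter> X \<subseteq> X - G j}" using H z by blast
    qed
    moreover have "F = (F \<inter> X) \<union> (F - X)" by blast
    ultimately show "F \<in> \<Delta>'" unfolding \<Delta>'_def using H by blast
  qed
  have sq2: "var x * var (y j) = (sqmono {x, y j} :: ('v, 'k) mpoly)" if "j < m" "x \<in> X" for x j
  proof -
    have "x \<noteq> y j" using that yX by blast
    then show ?thesis unfolding sqmono_def by simp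
  qed
  define P :: "('v, 'k) mpoly set" where "P = {var x * var (y j) | x j. j < m \<and> x \<in> G j}"
  define Nd :: "('v, 'k) mpoly set" where "Nd = {sqmono F | F. F \<subseteq> UNIV \<and> F \<notin> \<Delta>}"
  define NG :: "('v, 'k) mpoly set" where "NG = {sqmono F | F. F \<subseteq> X \<and> F \<notin> \<Gamma>}"
  have I_eq: "I = gen_ideal Nd" unfolding I_def SR_ideal_def Nd_def ..
  have IG_eq: "I\<Gamma> = gen_ideal NG" unfolding I\<Gamma>_def SR_ideal_def NG_def ..
  have P_Nd: "p \<in> gen_ideal Nd" if "p \<in> P" for p
  proof -
    obtain x j where xj: "p = var x * var (y j)" "j < m" "x \<in> G j" using \<open>p \<in> P\<close> unfolding P_def by blast
    have xX: "x \<in> X" using G_sub xj by blast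
    have "{x, y j} \<inter> X = {x}" using xX yX[OF xj(2)] by blast
    then have "{x, y j} \<notin> \<Delta>'" unfolding char using xj by blast
    moreover have "\<not> {x, y j} \<subseteq> X" using yX[OF xj(2)] by blast
    ultimately have "{x, y j} \<notin> \<Delta>" unfolding \<Delta>_def by blast
    then have "p \<in> Nd" unfolding Nd_def xj(1) sq2[OF xj(2) xX] by blast
    then show ?thesis by (rule gen_ideal_base)
  qed
  have Nd_P: "p \<in> gen_ideal P" if "p \<in> Nd" for p
  proof -
    obtain F where F: "p = sqmono F" "F \<notin> \<Delta>" using \<open>p \<in> Nd\<close> unfolding Nd_def by blast
    have nX: "\<not> F \<subseteq> X" and nD: "F \<notin> \<Delta>'" using F(2) unfolding \<Delta>_def by auto
    obtain j0 where j0: "j0 < m" "y j0 \<in> F" using nX notX by blast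
    have "\<exists>x j. j < m \<and> x \<in> G j \<and> x \<in> F \<and> y j \<in> F"
    proof (cases "F \<inter> X \<in> \<Gamma>")
      case True
      then obtain j where "j < m" "y j \<in> F" "\<not> F \<inter> X \<subseteq> X - G j" using nD char by blast
      then show ?thesis by blast
    next
      case False
      have "\<not> F \<inter> X \<subseteq> X - G j0" using False Gdown G_face j0(1) by blast
      then show ?thesis using j0 by blast
    qed
    then obtain x j where xj: "j < m" "x \<in> G j" "x \<in> F" "y j \<in> F" by blast
    have xX: "x \<in> X" using G_sub xj by blast
    have "sqmono F = sqmono (F - {x, y j}) * (sqmono {x, y j} :: ('v, 'k) mpoly)"
      unfolding sqmono_def using xj finF[of F] by (subst prod.subset_diff[of "{x, y j}" F]) auto
    also have "\<dots> = sqmono (F - {x, y j}) * (var x * var (y j))" using sq2[OF xj(1) xX] by simp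
    also have "\<dots> \<in> gen_ideal P" using xj unfolding P_def by (intro gen_ideal_mult gen_ideal_base) blast
    finally show ?thesis using F(1) by simp
  qed
  have claim1: "I = gen_ideal P" unfolding I_eq using gen_ideal_subset[OF P_Nd] gen_ideal_subset[OF Nd_P] by blast
  have key: "F \<notin> \<Delta>' \<longleftrightarrow> (F \<notin> \<Delta> \<or> (F \<subseteq> X \<and> F \<notin> \<Gamma>))" for F
  proof -
    have "F \<subseteq> X \<Longrightarrow> F \<in> \<Delta>' \<longleftrightarrow> F \<in> \<Gamma>" using char[of F] yX by (auto simp: Int_absorb2)
    then show ?thesis unfolding \<Delta>_def by blast
  qed
  have "{sqmono F | F. F \<subseteq> UNIV \<and> F \<notin> \<Delta>'} = Nd \<union> NG" unfolding Nd_def NG_def using key by blast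
  then have claim3: "SR_ideal UNIV \<Delta>' = ideal_sum I I\<Gamma>"
    unfolding SR_ideal_def I_eq IG_eq gen_ideal_Un by simp
  define YI :: "('v, 'k) mpoly set" where "YI = gen_ideal (var ` ?Y)"
  have I_YI: "I \<subseteq> YI" unfolding claim1 YI_def
  proof (rule gen_ideal_subset)
    fix p assume "p \<in> P"
    then obtain x j where xj: "p = var x * var (y j)" "j < m" unfolding P_def by blast
    have "var (y j) \<in> gen_ideal (var ` ?Y)" using xj(2) by (intro gen_ideal_base) blast
    then have "var x * var (y j) \<in> gen_ideal (var ` ?Y)" by (rule gen_ideal_mult)
    then show "p \<in> gen_ideal (var ` ?Y)" using xj(1) by simp
  qed
  have kill0: "killW ?Y r = 0" if "r \<in> YI" for r
  proof -
    obtain F c where F: "finite F" "F \<subseteq> var ` ?Y" "r = (\<Sum>s\<in>F. c s * s)"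
      using \<open>r \<in> YI\<close> unfolding YI_def gen_ideal_def by (auto simp only: mem_Collect_eq)
    have "killW ?Y (c s * s) = 0" if "s \<in> F" for s
    proof -
      obtain v where v: "v \<in> ?Y" "s = var v" using F(2) \<open>s \<in> F\<close> by blast
      show ?thesis unfolding v(2) by (rule killW_var[OF v(1)])
    qed
    then show ?thesis unfolding F(3) killW_sum by (intro sum.neutral ballI)
  qed
  have claim2: "I = ideal_sum I I\<Gamma> \<inter> YI"
  proof
    have "I \<subseteq> ideal_sum I I\<Gamma>" unfolding ideal_sum_def IG_eq using gen_ideal_0 by force
    then show "I \<subseteq> ideal_sum I I\<Gamma> \<inter> YI" using I_YI by blast
  next
    show "ideal_sum I I\<Gamma> \<inter> YI \<subseteq> I"
    proof
      fix f assume f: "f \<in> ideal_sum I I\<Gamma> \<inter> YI"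
      then obtain a b where ab: "f = a + b" "a \<in> I" "b \<in> I\<Gamma>" unfolding ideal_sum_def by blast
      obtain Fb cb where Fb: "finite Fb" "Fb \<subseteq> NG" "b = (\<Sum>s\<in>Fb. cb s * s)"
        using ab(3) unfolding IG_eq gen_ideal_def by (auto simp only: mem_Collect_eq)
      have "killW ?Y b = killW ?Y f - killW ?Y a" using ab(1) by (simp add: killW_diff[symmetric])
      also have "\<dots> = 0" using kill0 f ab(2) I_YI by auto
      finally have kb: "killW ?Y b = 0" .
      have NGs: "\<exists>\<sigma>. s = sqmono \<sigma> \<and> \<sigma> \<subseteq> X \<and> \<sigma> \<notin> \<Gamma>" if "s \<in> Fb" for s
        using Fb(2) that unfolding NG_def by blast
      have "killW ?Y b = (\<Sum>s\<in>Fb. killW ?Y (cb s) * s)"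
        unfolding Fb(3) killW_sum
      proof (rule sum.cong)
        fix s assume "s \<in> Fb"
        then obtain \<sigma> where "s = sqmono \<sigma>" "\<sigma> \<subseteq> X" using NGs by blast
        moreover have "\<sigma> \<inter> ?Y = {}" using \<open>\<sigma> \<subseteq> X\<close> disj by blast
        ultimately show "killW ?Y (cb s * s) = killW ?Y (cb s) * s" using killW_sqmono finF by blast
      qed simp
      then have "b = b - (\<Sum>s\<in>Fb. killW ?Y (cb s) * s)" using kb by simp
      also have "\<dots> = (\<Sum>s\<in>Fb. (cb s - killW ?Y (cb s)) * s)"
        unfolding Fb(3) by (simp add: sum_subtractf left_diff_distrib)
      also have "\<dots> \<in> gen_ideal Nd"
      proof (rule gen_ideal_sum[OF Fb(1)])
        fix s assume "s \<in> Fb"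
        then obtain \<sigma> where s: "s = sqmono \<sigma>" "\<sigma> \<subseteq> X" "\<sigma> \<notin> \<Gamma>" using NGs by blast
        show "(cb s - killW ?Y (cb s)) * s \<in> gen_ideal Nd"
        proof (rule gen_ideal_mults[OF diff_killW])
          fix t :: "('v, 'k) mpoly" assume "t \<in> var ` ?Y"
          then obtain j where j: "j < m" "t = var (y j)" by blast
          have yn: "y j \<notin> \<sigma>" using s(2) yX[OF j(1)] by blast
          have "t * s = sqmono (insert (y j) \<sigma>)" unfolding s(1) j(2) sqmono_def
            using yn finF[of \<sigma>] by simp
          moreover have "insert (y j) \<sigma> \<notin> \<Delta>"
          proof -
            have "insert (y j) \<sigma> \<inter> X = \<sigma>" using s(2) yX[OF j(1)] by blast
            then have "insert (y j) \<sigma> \<notin> \<Delta>'" using char s(3) by simp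
            moreover have "\<not> insert (y j) \<sigma> \<subseteq> X" using yX[OF j(1)] by blast
            ultimately show ?thesis unfolding \<Delta>_def by blast
          qed
          ultimately show "t * s \<in> gen_ideal Nd" unfolding Nd_def by (intro gen_ideal_base) blast
        qed
      qed
      finally have "b \<in> I" unfolding I_eq .
      then show "f \<in> I" using ab(1,2) unfolding I_eq by (simp add: gen_ideal_add)
    qed
  qed
  show ?thesis using claim1 claim2 claim3 unfolding YI_def P_def by (intro conjI)
qed

end
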